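(* The assignment sending a locally persistent category $\mathcal D$ to the pair $(\mathsf C^{\mathcal D},\mathrm W^{\mathcal D})$, and a locally persistent functor $F:\mathcal D\to\mathcal E$ to $F_*$ defined by $F_*(A)=F(A)$, $F_*((g,s))=(F(g),s)$, $F_*(\alpha_{g,h})=\alpha_{F(g),F(h)}$, defines a faithful functor from the category $\mathsf{LPC}$ of locally persistent categories and locally persistent functors to the category $\mathsf{W2Cat}$ of 2-weighted 2-categories and Lipschitz 2-functors. Moreover, for every locally persistent category $\mathcal D$ and all $A,B\in\mathcal D_0$, $d_{\mathcal D}(A,B)=d_{\mathsf C^{\mathcal D},\mathrm W^{\mathcal D}}(A,B)$.
   Context: A locally persistent category (LPC) $\mathcal D$ is a category enriched in $\mathsf{Fun}(\mathsf R,\mathsf{Set})$ ($\mathsf R$ the poset $\mathbb R_{\ge0}$, with Day convolution for addition). Explicitly: a class of objects $\mathcal D_0$; for $A,B$ and $s\ge0$ sets $\mathcal D_1(A,B)_s$ with shift maps $\mathrm S_{s,t}:\mathcal D_1(A,B)_s\to\mathcal D_1(A,B)_t$ for $s\le t$, $\mathrm S_{s,s}=\mathrm{id}$, $\mathrm S_{t,u}\mathrm S_{s,t}=\mathrm S_{s,u}$; associative compositions $\mathcal D_1(B,C)_t\times\mathcal D_1(A,B)_s\to\mathcal D_1(A,C)_{s+t}$, $(h,g)\mapsto hg$; identities $1_A\in\mathcal D_1(A,A)_0$ that are two-sided units; and $\mathrm S_{t,t'}(h)\mathrm S_{s,s'}(g)=\mathrm S_{s+t,s'+t'}(hg)$.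 A locally persistent functor $F:\mathcal D\to\mathcal E$ is a functor mapping $\mathcal D_1(A,B)_s\to\mathcal E_1(F(A),F(B))_s$, preserving composition and identities, with $\mathrm S_{s,t}(F(g))=F(\mathrm S_{s,t}(g))$. LPC interleaving: $A,B$ are $(s,t)$-interleaved if there are $f\in\mathcal D_1(A,B)_s$, $g\in\mathcal D_1(B,A)_t$ with $gf=\mathrm S_{0,s+t}(1_A)$ and $fg=\mathrm S_{0,s+t}(1_B)$; $d_{\mathcal D}(A,B)=\inf\max\{s,t\}$ over such. The 2-category $\mathsf C^{\mathcal D}$: objects $\mathcal D_0$; 1-morphisms $A\to B$ are pairs $(g,s)$ with $g\in\mathcal D_1(A,B)_s$; $(h,t)\circ(g,s)=(hg,s+t)$, identity $(1_A,0)$; between $(g,s)$ and $(h,t)$ there is a unique 2-morphism $\alpha_{g,h}$ iff $s\le t$ and $\mathrm S_{s,t}(g)=h$, otherwise none; $\alpha_{g,h}\alpha_{f,g}=\alpha_{f,h}$, $\alpha_{h,k}\bullet\alpha_{f,g}=\alpha_{hf,kg}$. $\mathrm W^{\mathcal D}_1((g,s))=s$, $\mathrm W^{\mathcal D}_2\equiv0$. A 2-weighted 2-category is a 2-category with $\mathrm W_1,\mathrm W_2\ge0$ on 1- and 2-morphisms, zero on identities, subadditive under composition of 1-morphisms and vertical/horizontal composition of 2-morphisms; a Lipschitz 2-functor $\Theta$ between them satisfies $\mathrm W'_1(\Theta(g))\le\mathrm W_1(g)$ and $\mathrm W'_2(\Theta(\alpha))\le\mathrm W_2(\alpha)$. The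 interleaving distance of a 2-weighted 2-category is $d_{\mathsf C,\mathrm W}(A,B)=\inf\max\{\mathrm W_1(g),\mathrm W_1(h),\mathrm W_2(\alpha),\mathrm W_2(\beta)\}$ over $g:A\to B$, $h:B\to A$, $\alpha:1_A\Rightarrow hg$, $\beta:1_B\Rightarrow gh$. Infima of empty sets are $\infty$. *)

theory Defs
  imports Main "HOL-Library.Extended_Real"
begin

text \<open>Hom-sets are indexed by source, target and persistence parameter s; shift maps
and compositions carry these indices explicitly (so hom-sets are effectively disjoint).
LComp D A B C s t h g is the composite hg of g in Hom A B s and h in Hom B C t.\<close>

record ('o, 'm) lpc =
  LOb :: "'o set"
  LHom :: "'o \<Rightarrow> 'o \<Rightarrow> real \<Rightarrow> 'm set"
  LShift :: "'o \<Rightarrow> 'o \<Rightarrow> real \<Rightarrow> real \<Rightarrow> 'm \<Rightarrow> 'm"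
  LComp :: "'o \<Rightarrow> 'o \<Rightarrow> 'o \<Rightarrow> real \<Rightarrow> real \<Rightarrow> 'm \<Rightarrow> 'm \<Rightarrow> 'm"
  LId :: "'o \<Rightarrow> 'm"

definition is_lpc :: "('o, 'm) lpc \<Rightarrow> bool" where
  "is_lpc D \<longleftrightarrow>
    (\<forall>A\<in>LOb D. \<forall>B\<in>LOb D. \<forall>s t g. 0 \<le> s \<and> s \<le> t \<and> g \<in> LHom D A B s
        \<longrightarrow> LShift D A B s t g \<in> LHom D A B t) \<and>
    (\<forall>A\<in>LOb D. \<forall>B\<in>LOb D. \<forall>s g. 0 \<le> s \<and> g \<in> LHom D A B s
        \<longrightarrow> LShift D A B s s g = g) \<and>
    (\<forall>A\<in>LOb D. \<forall>B\<in>LOb D. \<forall>s t u g. 0 \<le> s \<and> s \<le> t \<and> t \<le> u \<and> g \<in> LHom D A B s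
        \<longrightarrow> LShift D A B t u (LShift D A B s t g) = LShift D A B s u g) \<and>
    (\<forall>A\<in>LOb D. \<forall>B\<in>LOb D. \<forall>C\<in>LOb D. \<forall>s t g h. 0 \<le> s \<and> 0 \<le> t \<and>
        g \<in> LHom D A B s \<and> h \<in> LHom D B C t
        \<longrightarrow> LComp D A B C s t h g \<in> LHom D A C (s + t)) \<and>
    (\<forall>A\<in>LOb D. \<forall>B\<in>LOb D. \<forall>C\<in>LOb D. \<forall>E\<in>LOb D. \<forall>s t u g h k.
        0 \<le> s \<and> 0 \<le> t \<and> 0 \<le> u \<and>
        g \<in> LHom D A B s \<and> h \<in> LHom D B C t \<and> k \<in> LHom D C E u
        \<longrightarrow> LComp D A C E (s + t) u k (LComp D A B C s t h g)
            = LComp D A B E s (t + u) (LComp D B C E t u k h) g) \<and>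
    (\<forall>A\<in>LOb D. LId D A \<in> LHom D A A 0) \<and>
    (\<forall>A\<in>LOb D. \<forall>B\<in>LOb D. \<forall>s g. 0 \<le> s \<and> g \<in> LHom D A B s
        \<longrightarrow> LComp D A A B 0 s g (LId D A) = g \<and> LComp D A B B s 0 (LId D B) g = g) \<and>
    (\<forall>A\<in>LOb D. \<forall>B\<in>LOb D. \<forall>C\<in>LOb D. \<forall>s s' t t' g h.
        0 \<le> s \<and> s \<le> s' \<and> 0 \<le> t \<and> t \<le> t' \<and>
        g \<in> LHom D A B s \<and> h \<in> LHom D B C t
        \<longrightarrow> LComp D A B C s' t' (LShift D B C t t' h) (LShift D A B s s' g)
            = LShift D A C (s + t) (s' + t') (LComp D A B C s t h g))"

record ('o, 'm, 'p, 'n) lpfun =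
  FOb :: "'o \<Rightarrow> 'p"
  FMor :: "'o \<Rightarrow> 'o \<Rightarrow> real \<Rightarrow> 'm \<Rightarrow> 'n"

definition is_lpfunctor :: "('o, 'm) lpc \<Rightarrow> ('p, 'n) lpc \<Rightarrow> ('o, 'm, 'p, 'n) lpfun \<Rightarrow> bool" where
  "is_lpfunctor D E F \<longleftrightarrow>
    (\<forall>A\<in>LOb D. FOb F A \<in> LOb E) \<and>
    (\<forall>A\<in>LOb D. \<forall>B\<in>LOb D. \<forall>s g. 0 \<le> s \<and> g \<in> LHom D A B s
        \<longrightarrow> FMor F A B s g \<in> LHom E (FOb F A) (FOb F B) s) \<and>
    (\<forall>A\<in>LOb D. \<forall>B\<in>LOb D. \<forall>C\<in>LOb D. \<forall>s t g h. 0 \<le> s \<and> 0 \<le> t \<and>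
        g \<in> LHom D A B s \<and> h \<in> LHom D B C t
        \<longrightarrow> FMor F A C (s + t) (LComp D A B C s t h g)
            = LComp E (FOb F A) (FOb F B) (FOb F C) s t (FMor F B C t h) (FMor F A B s g)) \<and>
    (\<forall>A\<in>LOb D. FMor F A A 0 (LId D A) = LId E (FOb F A)) \<and>
    (\<forall>A\<in>LOb D. \<forall>B\<in>LOb D. \<forall>s t g. 0 \<le> s \<and> s \<le> t \<and> g \<in> LHom D A B s
        \<longrightarrow> LShift E (FOb F A) (FOb F B) s t (FMor F A B s g) = FMor F A B t (LShift D A B s t g))"

definition lpfun_id :: "('o, 'm, 'o, 'm) lpfun" where
  "lpfun_id = \<lparr>FOb = (\<lambda>A. A), FMor = (\<lambda>A B s g. g)\<rparr>"

definition lpfun_comp :: "('p, 'n, 'q, 'k) lpfun \<Rightarrow> ('o, 'm, 'p, 'n) lpfun \<Rightarrow> ('o, 'm, 'q, 'k) lpfun" where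
  "lpfun_comp G F = \<lparr>FOb = (\<lambda>A. FOb G (FOb F A)),
     FMor = (\<lambda>A B s g. FMor G (FOb F A) (FOb F B) s (FMor F A B s g))\<rparr>"

definition lpfun_eq :: "('o, 'm) lpc \<Rightarrow> ('o, 'm, 'p, 'n) lpfun \<Rightarrow> ('o, 'm, 'p, 'n) lpfun \<Rightarrow> bool" where
  "lpfun_eq D F G \<longleftrightarrow>
    (\<forall>A\<in>LOb D. FOb F A = FOb G A) \<and>
    (\<forall>A\<in>LOb D. \<forall>B\<in>LOb D. \<forall>s g. 0 \<le> s \<and> g \<in> LHom D A B s \<longrightarrow> FMor F A B s g = FMor G A B s g)"

definition lpc_dist :: "('o, 'm) lpc \<Rightarrow> 'o \<Rightarrow> 'o \<Rightarrow> ereal" where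
  "lpc_dist D A B = Inf {ereal (max s t) | s t f g.
     0 \<le> s \<and> 0 \<le> t \<and> f \<in> LHom D A B s \<and> g \<in> LHom D B A t \<and>
     LComp D A B A s t g f = LShift D A A 0 (s + t) (LId D A) \<and>
     LComp D B A B t s f g = LShift D B B 0 (s + t) (LId D B)}"

text \<open>1-morphisms carry source/target maps; 2-morphisms carry source/target 1-morphisms.
tc_comp1 h g = h \<circ> g; tc_vcomp \<beta> \<alpha> = \<beta>\<alpha> (vertical);
tc_hcomp \<beta> \<alpha> = \<beta> \<bullet> \<alpha> (horizontal, \<alpha> on the right).\<close>

record ('a, 'b, 'c) twocat =
  tc_ob :: "'a set"
  tc_m1 :: "'b set"
  tc_src1 :: "'b \<Rightarrow> 'a"
  tc_tgt1 :: "'b \<Rightarrow> 'a"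
  tc_m2 :: "'c set"
  tc_src2 :: "'c \<Rightarrow> 'b"
  tc_tgt2 :: "'c \<Rightarrow> 'b"
  tc_comp1 :: "'b \<Rightarrow> 'b \<Rightarrow> 'b"
  tc_id1 :: "'a \<Rightarrow> 'b"
  tc_vcomp :: "'c \<Rightarrow> 'c \<Rightarrow> 'c"
  tc_hcomp :: "'c \<Rightarrow> 'c \<Rightarrow> 'c"
  tc_id2 :: "'b \<Rightarrow> 'c"

definition two_category :: "('a, 'b, 'c) twocat \<Rightarrow> bool" where
  "two_category C \<longleftrightarrow>
    (\<forall>g\<in>tc_m1 C. tc_src1 C g \<in> tc_ob C \<and> tc_tgt1 C g \<in> tc_ob C) \<and>
    (\<forall>A\<in>tc_ob C. tc_id1 C A \<in> tc_m1 C \<and> tc_src1 C (tc_id1 C A) = A \<and> tc_tgt1 C (tc_id1 C A) = A) \<and>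
    (\<forall>g\<in>tc_m1 C. \<forall>h\<in>tc_m1 C. tc_tgt1 C g = tc_src1 C h \<longrightarrow>
        tc_comp1 C h g \<in> tc_m1 C \<and> tc_src1 C (tc_comp1 C h g) = tc_src1 C g
        \<and> tc_tgt1 C (tc_comp1 C h g) = tc_tgt1 C h) \<and>
    (\<forall>g\<in>tc_m1 C. \<forall>h\<in>tc_m1 C. \<forall>k\<in>tc_m1 C. tc_tgt1 C g = tc_src1 C h \<and> tc_tgt1 C h = tc_src1 C k \<longrightarrow>
        tc_comp1 C k (tc_comp1 C h g) = tc_comp1 C (tc_comp1 C k h) g) \<and>
    (\<forall>g\<in>tc_m1 C. tc_comp1 C g (tc_id1 C (tc_src1 C g)) = g \<and> tc_comp1 C (tc_id1 C (tc_tgt1 C g)) g = g) \<and>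
    (\<forall>\<alpha>\<in>tc_m2 C. tc_src2 C \<alpha> \<in> tc_m1 C \<and> tc_tgt2 C \<alpha> \<in> tc_m1 C \<and>
        tc_src1 C (tc_src2 C \<alpha>) = tc_src1 C (tc_tgt2 C \<alpha>) \<and>
        tc_tgt1 C (tc_src2 C \<alpha>) = tc_tgt1 C (tc_tgt2 C \<alpha>)) \<and>
    (\<forall>g\<in>tc_m1 C. tc_id2 C g \<in> tc_m2 C \<and> tc_src2 C (tc_id2 C g) = g \<and> tc_tgt2 C (tc_id2 C g) = g) \<and>
    (\<forall>\<alpha>\<in>tc_m2 C. \<forall>\<beta>\<in>tc_m2 C. tc_tgt2 C \<alpha> = tc_src2 C \<beta> \<longrightarrow>
        tc_vcomp C \<beta> \<alpha> \<in> tc_m2 C \<and> tc_src2 C (tc_vcomp C \<beta> \<alpha>) = tc_src2 C \<alpha>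
        \<and> tc_tgt2 C (tc_vcomp C \<beta> \<alpha>) = tc_tgt2 C \<beta>) \<and>
    (\<forall>\<alpha>\<in>tc_m2 C. \<forall>\<beta>\<in>tc_m2 C. \<forall>\<gamma>\<in>tc_m2 C. tc_tgt2 C \<alpha> = tc_src2 C \<beta> \<and> tc_tgt2 C \<beta> = tc_src2 C \<gamma> \<longrightarrow>
        tc_vcomp C \<gamma> (tc_vcomp C \<beta> \<alpha>) = tc_vcomp C (tc_vcomp C \<gamma> \<beta>) \<alpha>) \<and>
    (\<forall>\<alpha>\<in>tc_m2 C. tc_vcomp C \<alpha> (tc_id2 C (tc_src2 C \<alpha>)) = \<alpha> \<and> tc_vcomp C (tc_id2 C (tc_tgt2 C \<alpha>)) \<alpha> = \<alpha>) \<and>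
    (\<forall>\<alpha>\<in>tc_m2 C. \<forall>\<beta>\<in>tc_m2 C. tc_tgt1 C (tc_src2 C \<alpha>) = tc_src1 C (tc_src2 C \<beta>) \<longrightarrow>
        tc_hcomp C \<beta> \<alpha> \<in> tc_m2 C \<and>
        tc_src2 C (tc_hcomp C \<beta> \<alpha>) = tc_comp1 C (tc_src2 C \<beta>) (tc_src2 C \<alpha>) \<and>
        tc_tgt2 C (tc_hcomp C \<beta> \<alpha>) = tc_comp1 C (tc_tgt2 C \<beta>) (tc_tgt2 C \<alpha>)) \<and>
    (\<forall>\<alpha>\<in>tc_m2 C. \<forall>\<beta>\<in>tc_m2 C. \<forall>\<gamma>\<in>tc_m2 C.
        tc_tgt1 C (tc_src2 C \<alpha>) = tc_src1 C (tc_src2 C \<beta>) \<and>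
        tc_tgt1 C (tc_src2 C \<beta>) = tc_src1 C (tc_src2 C \<gamma>) \<longrightarrow>
        tc_hcomp C \<gamma> (tc_hcomp C \<beta> \<alpha>) = tc_hcomp C (tc_hcomp C \<gamma> \<beta>) \<alpha>) \<and>
    (\<forall>\<alpha>\<in>tc_m2 C. tc_hcomp C (tc_id2 C (tc_id1 C (tc_tgt1 C (tc_src2 C \<alpha>)))) \<alpha> = \<alpha> \<and>
        tc_hcomp C \<alpha> (tc_id2 C (tc_id1 C (tc_src1 C (tc_src2 C \<alpha>)))) = \<alpha>) \<and>
    (\<forall>g\<in>tc_m1 C. \<forall>h\<in>tc_m1 C. tc_tgt1 C g = tc_src1 C h \<longrightarrow>
        tc_hcomp C (tc_id2 C h) (tc_id2 C g) = tc_id2 C (tc_comp1 C h g)) \<and>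
    (\<forall>\<alpha>\<in>tc_m2 C. \<forall>\<alpha>'\<in>tc_m2 C. \<forall>\<beta>\<in>tc_m2 C. \<forall>\<beta>'\<in>tc_m2 C.
        tc_tgt2 C \<alpha> = tc_src2 C \<alpha>' \<and> tc_tgt2 C \<beta> = tc_src2 C \<beta>' \<and>
        tc_tgt1 C (tc_src2 C \<alpha>) = tc_src1 C (tc_src2 C \<beta>) \<longrightarrow>
        tc_hcomp C (tc_vcomp C \<beta>' \<beta>) (tc_vcomp C \<alpha>' \<alpha>)
          = tc_vcomp C (tc_hcomp C \<beta>' \<alpha>') (tc_hcomp C \<beta> \<alpha>))"

definition weighted_twocat :: "('a, 'b, 'c) twocat \<Rightarrow> ('b \<Rightarrow> real) \<Rightarrow> ('c \<Rightarrow> real) \<Rightarrow> bool" where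
  "weighted_twocat C W1 W2 \<longleftrightarrow> two_category C \<and>
    (\<forall>g\<in>tc_m1 C. 0 \<le> W1 g) \<and> (\<forall>\<alpha>\<in>tc_m2 C. 0 \<le> W2 \<alpha>) \<and>
    (\<forall>A\<in>tc_ob C. W1 (tc_id1 C A) = 0) \<and> (\<forall>g\<in>tc_m1 C. W2 (tc_id2 C g) = 0) \<and>
    (\<forall>g\<in>tc_m1 C. \<forall>h\<in>tc_m1 C. tc_tgt1 C g = tc_src1 C h \<longrightarrow>
        W1 (tc_comp1 C h g) \<le> W1 h + W1 g) \<and>
    (\<forall>\<alpha>\<in>tc_m2 C. \<forall>\<beta>\<in>tc_m2 C. tc_tgt2 C \<alpha> = tc_src2 C \<beta> \<longrightarrow>
        W2 (tc_vcomp C \<beta> \<alpha>) \<le> W2 \<beta> + W2 \<alpha>) \<and>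
    (\<forall>\<alpha>\<in>tc_m2 C. \<forall>\<beta>\<in>tc_m2 C. tc_tgt1 C (tc_src2 C \<alpha>) = tc_src1 C (tc_src2 C \<beta>) \<longrightarrow>
        W2 (tc_hcomp C \<beta> \<alpha>) \<le> W2 \<beta> + W2 \<alpha>)"

record ('a, 'b, 'c, 'x, 'y, 'z) twofun =
  TOb :: "'a \<Rightarrow> 'x"
  TM1 :: "'b \<Rightarrow> 'y"
  TM2 :: "'c \<Rightarrow> 'z"

definition two_functor :: "('a, 'b, 'c) twocat \<Rightarrow> ('x, 'y, 'z) twocat \<Rightarrow> ('a, 'b, 'c, 'x, 'y, 'z) twofun \<Rightarrow> bool" where
  "two_functor C C' T \<longleftrightarrow>
    (\<forall>A\<in>tc_ob C. TOb T A \<in> tc_ob C') \<and>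
    (\<forall>g\<in>tc_m1 C. TM1 T g \<in> tc_m1 C' \<and> tc_src1 C' (TM1 T g) = TOb T (tc_src1 C g)
        \<and> tc_tgt1 C' (TM1 T g) = TOb T (tc_tgt1 C g)) \<and>
    (\<forall>\<alpha>\<in>tc_m2 C. TM2 T \<alpha> \<in> tc_m2 C' \<and> tc_src2 C' (TM2 T \<alpha>) = TM1 T (tc_src2 C \<alpha>)
        \<and> tc_tgt2 C' (TM2 T \<alpha>) = TM1 T (tc_tgt2 C \<alpha>)) \<and>
    (\<forall>A\<in>tc_ob C. TM1 T (tc_id1 C A) = tc_id1 C' (TOb T A)) \<and>
    (\<forall>g\<in>tc_m1 C. \<forall>h\<in>tc_m1 C. tc_tgt1 C g = tc_src1 C h \<longrightarrow>
        TM1 T (tc_comp1 C h g) = tc_comp1 C' (TM1 T h) (TM1 T g)) \<and>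
    (\<forall>g\<in>tc_m1 C. TM2 T (tc_id2 C g) = tc_id2 C' (TM1 T g)) \<and>
    (\<forall>\<alpha>\<in>tc_m2 C. \<forall>\<beta>\<in>tc_m2 C. tc_tgt2 C \<alpha> = tc_src2 C \<beta> \<longrightarrow>
        TM2 T (tc_vcomp C \<beta> \<alpha>) = tc_vcomp C' (TM2 T \<beta>) (TM2 T \<alpha>)) \<and>
    (\<forall>\<alpha>\<in>tc_m2 C. \<forall>\<beta>\<in>tc_m2 C. tc_tgt1 C (tc_src2 C \<alpha>) = tc_src1 C (tc_src2 C \<beta>) \<longrightarrow>
        TM2 T (tc_hcomp C \<beta> \<alpha>) = tc_hcomp C' (TM2 T \<beta>) (TM2 T \<alpha>))"

definition lipschitz_twofun ::
  "('a, 'b, 'c) twocat \<Rightarrow> ('b \<Rightarrow> real) \<Rightarrow> ('c \<Rightarrow> real) \<Rightarrow>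
   ('x, 'y, 'z) twocat \<Rightarrow> ('y \<Rightarrow> real) \<Rightarrow> ('z \<Rightarrow> real) \<Rightarrow>
   ('a, 'b, 'c, 'x, 'y, 'z) twofun \<Rightarrow> bool" where
  "lipschitz_twofun C W1 W2 C' W1' W2' T \<longleftrightarrow> two_functor C C' T \<and>
    (\<forall>g\<in>tc_m1 C. W1' (TM1 T g) \<le> W1 g) \<and> (\<forall>\<alpha>\<in>tc_m2 C. W2' (TM2 T \<alpha>) \<le> W2 \<alpha>)"

definition twofun_id :: "('a, 'b, 'c, 'a, 'b, 'c) twofun" where
  "twofun_id = \<lparr>TOb = (\<lambda>x. x), TM1 = (\<lambda>x. x), TM2 = (\<lambda>x. x)\<rparr>"

definition twofun_comp :: "('x, 'y, 'z, 'u, 'v, 'w) twofun \<Rightarrow> ('a, 'b, 'c, 'x, 'y, 'z) twofun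
     \<Rightarrow> ('a, 'b, 'c, 'u, 'v, 'w) twofun" where
  "twofun_comp S T = \<lparr>TOb = TOb S \<circ> TOb T, TM1 = TM1 S \<circ> TM1 T, TM2 = TM2 S \<circ> TM2 T\<rparr>"

definition twofun_eq :: "('a, 'b, 'c) twocat \<Rightarrow> ('a, 'b, 'c, 'x, 'y, 'z) twofun \<Rightarrow> ('a, 'b, 'c, 'x, 'y, 'z) twofun \<Rightarrow> bool" where
  "twofun_eq C S T \<longleftrightarrow> (\<forall>A\<in>tc_ob C. TOb S A = TOb T A) \<and>
     (\<forall>g\<in>tc_m1 C. TM1 S g = TM1 T g) \<and> (\<forall>\<alpha>\<in>tc_m2 C. TM2 S \<alpha> = TM2 T \<alpha>)"

definition wdist :: "('a, 'b, 'c) twocat \<Rightarrow> ('b \<Rightarrow> real) \<Rightarrow> ('c \<Rightarrow> real) \<Rightarrow> 'a \<Rightarrow> 'a \<Rightarrow> ereal" where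
  "wdist C W1 W2 A B = Inf {ereal (max (max (W1 g) (W1 h)) (max (W2 \<alpha>) (W2 \<beta>))) | g h \<alpha> \<beta>.
     g \<in> tc_m1 C \<and> tc_src1 C g = A \<and> tc_tgt1 C g = B \<and>
     h \<in> tc_m1 C \<and> tc_src1 C h = B \<and> tc_tgt1 C h = A \<and>
     \<alpha> \<in> tc_m2 C \<and> tc_src2 C \<alpha> = tc_id1 C A \<and> tc_tgt2 C \<alpha> = tc_comp1 C h g \<and>
     \<beta> \<in> tc_m2 C \<and> tc_src2 C \<beta> = tc_id1 C B \<and> tc_tgt2 C \<beta> = tc_comp1 C g h}"

text \<open>A 1-morphism (g,s) : A \<rightarrow> B is represented as the tuple (A, B, s, g);
the unique 2-morphism \<alpha>_{g,h} is represented by the pair of its source and target.\<close>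

type_synonym ('o, 'm) cd1 = "'o \<times> 'o \<times> real \<times> 'm"

definition cd_comp1 :: "('o, 'm) lpc \<Rightarrow> ('o, 'm) cd1 \<Rightarrow> ('o, 'm) cd1 \<Rightarrow> ('o, 'm) cd1" where
  "cd_comp1 D x y = (case x of (B', C, t, h) \<Rightarrow> case y of (A, B, s, g) \<Rightarrow>
      (A, C, s + t, LComp D A B C s t h g))"

definition CD :: "('o, 'm) lpc \<Rightarrow> ('o, ('o, 'm) cd1, ('o, 'm) cd1 \<times> ('o, 'm) cd1) twocat" where
  "CD D = \<lparr>
     tc_ob = LOb D,
     tc_m1 = {(A, B, s, g) | A B s g. A \<in> LOb D \<and> B \<in> LOb D \<and> 0 \<le> s \<and> g \<in> LHom D A B s},
     tc_src1 = (\<lambda>(A, B, s, g). A),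
     tc_tgt1 = (\<lambda>(A, B, s, g). B),
     tc_m2 = {((A, B, s, g), (A, B, t, h)) | A B s t g h.
                A \<in> LOb D \<and> B \<in> LOb D \<and> 0 \<le> s \<and> g \<in> LHom D A B s \<and> h \<in> LHom D A B t \<and>
                s \<le> t \<and> LShift D A B s t g = h},
     tc_src2 = fst,
     tc_tgt2 = snd,
     tc_comp1 = cd_comp1 D,
     tc_id1 = (\<lambda>A. (A, A, 0, LId D A)),
     tc_vcomp = (\<lambda>\<beta> \<alpha>. (fst \<alpha>, snd \<beta>)),
     tc_hcomp = (\<lambda>\<beta> \<alpha>. (cd_comp1 D (fst \<beta>) (fst \<alpha>), cd_comp1 D (snd \<beta>) (snd \<alpha>))),
     tc_id2 = (\<lambda>x. (x, x))\<rparr>"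

definition WD1 :: "('o, 'm) cd1 \<Rightarrow> real" where
  "WD1 x = (case x of (A, B, s, g) \<Rightarrow> s)"

definition WD2 :: "('o, 'm) cd1 \<times> ('o, 'm) cd1 \<Rightarrow> real" where
  "WD2 \<alpha> = 0"

definition lpstar_m1 :: "('o, 'm, 'p, 'n) lpfun \<Rightarrow> ('o, 'm) cd1 \<Rightarrow> ('p, 'n) cd1" where
  "lpstar_m1 F x = (case x of (A, B, s, g) \<Rightarrow> (FOb F A, FOb F B, s, FMor F A B s g))"

definition lpstar :: "('o, 'm, 'p, 'n) lpfun \<Rightarrow>
   ('o, ('o, 'm) cd1, ('o, 'm) cd1 \<times> ('o, 'm) cd1, 'p, ('p, 'n) cd1, ('p, 'n) cd1 \<times> ('p, 'n) cd1) twofun" where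
  "lpstar F = \<lparr>TOb = FOb F, TM1 = lpstar_m1 F,
     TM2 = (\<lambda>\<alpha>. (lpstar_m1 F (fst \<alpha>), lpstar_m1 F (snd \<alpha>)))\<rparr>"

end

theory Submission
  imports Defs
begin


context fixes D :: "('o,'m) lpc" assumes L: "is_lpc D" begin
lemma sh_mem: "A \<in> LOb D \<Longrightarrow> B \<in> LOb D \<Longrightarrow> 0 \<le> s \<Longrightarrow> s \<le> t \<Longrightarrow> g \<in> LHom D A B s \<Longrightarrow> LShift D A B s t g \<in> LHom D A B t"
  using L[unfolded is_lpc_def, THEN conjunct1] by blast
lemma sh_id: "A \<in> LOb D \<Longrightarrow> B \<in> LOb D \<Longrightarrow> 0 \<le> s \<Longrightarrow> g \<in> LHom D A B s \<Longrightarrow> LShift D A B s s g = g"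
  using L[unfolded is_lpc_def, THEN conjunct2, THEN conjunct1] by blast
lemma sh_tr: "A \<in> LOb D \<Longrightarrow> B \<in> LOb D \<Longrightarrow> 0 \<le> s \<Longrightarrow> s \<le> t \<Longrightarrow> t \<le> u \<Longrightarrow> g \<in> LHom D A B s \<Longrightarrow> LShift D A B t u (LShift D A B s t g) = LShift D A B s u g"
  using L[unfolded is_lpc_def, THEN conjunct2, THEN conjunct2, THEN conjunct1] by blast
lemma co_mem: "A \<in> LOb D \<Longrightarrow> B \<in> LOb D \<Longrightarrow> C \<in> LOb D \<Longrightarrow> 0 \<le> s \<Longrightarrow> 0 \<le> t \<Longrightarrow> g \<in> LHom D A B s \<Longrightarrow> h \<in> LHom D B C t \<Longrightarrow> LComp D A B C s t h g \<in> LHom D A C (s + t)"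
  using L[unfolded is_lpc_def, THEN conjunct2, THEN conjunct2, THEN conjunct2, THEN conjunct1] by blast
lemma co_assoc: "A \<in> LOb D \<Longrightarrow> B \<in> LOb D \<Longrightarrow> C \<in> LOb D \<Longrightarrow> E \<in> LOb D \<Longrightarrow> 0 \<le> s \<Longrightarrow> 0 \<le> t \<Longrightarrow> 0 \<le> u \<Longrightarrow>
  g \<in> LHom D A B s \<Longrightarrow> h \<in> LHom D B C t \<Longrightarrow> k \<in> LHom D C E u \<Longrightarrow>
  LComp D A C E (s + t) u k (LComp D A B C s t h g) = LComp D A B E s (t + u) (LComp D B C E t u k h) g"
  using L[unfolded is_lpc_def, THEN conjunct2, THEN conjunct2, THEN conjunct2, THEN conjunct2, THEN conjunct1] by blast
lemma id_mem: "A \<in> LOb D \<Longrightarrow> LId D A \<in> LHom D A A 0"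
  using L[unfolded is_lpc_def, THEN conjunct2, THEN conjunct2, THEN conjunct2, THEN conjunct2, THEN conjunct2, THEN conjunct1] by blast
lemma unitl: "A \<in> LOb D \<Longrightarrow> B \<in> LOb D \<Longrightarrow> 0 \<le> s \<Longrightarrow> g \<in> LHom D A B s \<Longrightarrow> LComp D A A B 0 s g (LId D A) = g"
  using L[unfolded is_lpc_def, THEN conjunct2, THEN conjunct2, THEN conjunct2, THEN conjunct2, THEN conjunct2, THEN conjunct2, THEN conjunct1] by blast
lemma unitr: "A \<in> LOb D \<Longrightarrow> B \<in> LOb D \<Longrightarrow> 0 \<le> s \<Longrightarrow> g \<in> LHom D A B s \<Longrightarrow> LComp D A B B s 0 (LId D B) g = g"
  using L[unfolded is_lpc_def, THEN conjunct2, THEN conjunct2, THEN conjunct2, THEN conjunct2, THEN conjunct2, THEN conjunct2, THEN conjunct1] by blast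
lemma inter: "A \<in> LOb D \<Longrightarrow> B \<in> LOb D \<Longrightarrow> C \<in> LOb D \<Longrightarrow> 0 \<le> s \<Longrightarrow> s \<le> s' \<Longrightarrow> 0 \<le> t \<Longrightarrow> t \<le> t' \<Longrightarrow>
   g \<in> LHom D A B s \<Longrightarrow> h \<in> LHom D B C t \<Longrightarrow>
   LComp D A B C s' t' (LShift D B C t t' h) (LShift D A B s s' g) = LShift D A C (s + t) (s' + t') (LComp D A B C s t h g)"
  using L[unfolded is_lpc_def, THEN conjunct2, THEN conjunct2, THEN conjunct2, THEN conjunct2, THEN conjunct2, THEN conjunct2, THEN conjunct2] by blast

lemmas lpcfacts = sh_mem sh_id sh_tr co_mem co_assoc id_mem unitl unitr inter

lemma p1: "weighted_twocat (CD D) WD1 WD2"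
  unfolding weighted_twocat_def two_category_def
  apply (intro conjI)
  apply (auto simp: CD_def cd_comp1_def WD1_def WD2_def lpcfacts add.assoc)
  done
end

context fixes D :: "('o,'m) lpc" and E :: "('p,'n) lpc" and F :: "('o, 'm, 'p, 'n) lpfun"
  assumes LD: "is_lpc D" and LE: "is_lpc E" and LF: "is_lpfunctor D E F" begin
lemma f_ob: "A \<in> LOb D \<Longrightarrow> FOb F A \<in> LOb E" using LF[unfolded is_lpfunctor_def, THEN conjunct1] by blast
lemma f_mem: "A \<in> LOb D \<Longrightarrow> B \<in> LOb D \<Longrightarrow> 0 \<le> s \<Longrightarrow> g \<in> LHom D A B s
        \<Longrightarrow> FMor F A B s g \<in> LHom E (FOb F A) (FOb F B) s" using LF[unfolded is_lpfunctor_def, THEN conjunct2, THEN conjunct1] by blast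
lemma f_comp: "A \<in> LOb D \<Longrightarrow> B \<in> LOb D \<Longrightarrow> C \<in> LOb D \<Longrightarrow> 0 \<le> s \<Longrightarrow> 0 \<le> t \<Longrightarrow>
        g \<in> LHom D A B s \<Longrightarrow> h \<in> LHom D B C t
        \<Longrightarrow> FMor F A C (s + t) (LComp D A B C s t h g)
            = LComp E (FOb F A) (FOb F B) (FOb F C) s t (FMor F B C t h) (FMor F A B s g)"
  using LF[unfolded is_lpfunctor_def, THEN conjunct2, THEN conjunct2, THEN conjunct1] by blast
lemma f_id: "A \<in> LOb D \<Longrightarrow> FMor F A A 0 (LId D A) = LId E (FOb F A)" using LF[unfolded is_lpfunctor_def, THEN conjunct2, THEN conjunct2, THEN conjunct2, THEN conjunct1] by blast
lemma f_sh: "A \<in> LOb D \<Longrightarrow> B \<in> LOb D \<Longrightarrow> 0 \<le> s \<Longrightarrow> s \<le> t \<Longrightarrow> g \<in> LHom D A B s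
        \<Longrightarrow> LShift E (FOb F A) (FOb F B) s t (FMor F A B s g) = FMor F A B t (LShift D A B s t g)"
  using LF[unfolded is_lpfunctor_def, THEN conjunct2, THEN conjunct2, THEN conjunct2, THEN conjunct2] by blast

lemma p2: "lipschitz_twofun (CD D) WD1 WD2 (CD E) WD1 WD2 (lpstar F)"
  unfolding lipschitz_twofun_def two_functor_def
  apply (intro conjI)
  apply (auto simp: CD_def cd_comp1_def WD1_def WD2_def lpstar_def lpstar_m1_def f_ob f_mem f_comp f_id f_sh)
  done
end

lemma p3: "twofun_eq (CD D) (lpstar (lpfun_id :: ('o, 'm, 'o, 'm) lpfun)) twofun_id"
  by (auto simp: twofun_eq_def CD_def lpstar_def lpfun_id_def twofun_id_def lpstar_m1_def)

lemma p4: "twofun_eq (CD D) (lpstar (lpfun_comp K F)) (twofun_comp (lpstar K) (lpstar F))"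
  by (auto simp: twofun_eq_def CD_def lpstar_def lpfun_comp_def twofun_comp_def lpstar_m1_def)

lemma p5: assumes h: "twofun_eq (CD D) (lpstar F) (lpstar G)" shows "lpfun_eq D F G"
proof -
  have 1: "\<forall>A\<in>LOb D. FOb F A = FOb G A" using h by (simp add: twofun_eq_def CD_def lpstar_def)
  have 2: "\<forall>A\<in>LOb D. \<forall>B\<in>LOb D. \<forall>s g. 0 \<le> s \<and> g \<in> LHom D A B s \<longrightarrow> FMor F A B s g = FMor G A B s g"
  proof (intro ballI allI impI)
    fix A B s g assume a: "A \<in> LOb D" "B \<in> LOb D" "0 \<le> s \<and> g \<in> LHom D A B s"
    then have "(A,B,s,g) \<in> tc_m1 (CD D)" by (simp add: CD_def)
    then have "TM1 (lpstar F) (A,B,s,g) = TM1 (lpstar G) (A,B,s,g)" using h unfolding twofun_eq_def by blast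
    then show "FMor F A B s g = FMor G A B s g" by (simp add: lpstar_def lpstar_m1_def)
  qed
  show ?thesis using 1 2 unfolding lpfun_eq_def by blast
qed

lemma p6b: assumes "is_lpc D" "A \<in> LOb D" "B \<in> LOb D"
  and "x \<in> {ereal (max (max (WD1 g) (WD1 h)) (max (WD2 \<alpha>) (WD2 \<beta>))) | g h \<alpha> \<beta>.
     g \<in> tc_m1 (CD D) \<and> tc_src1 (CD D) g = A \<and> tc_tgt1 (CD D) g = B \<and>
     h \<in> tc_m1 (CD D) \<and> tc_src1 (CD D) h = B \<and> tc_tgt1 (CD D) h = A \<and>
     \<alpha> \<in> tc_m2 (CD D) \<and> tc_src2 (CD D) \<alpha> = tc_id1 (CD D) A \<and> tc_tgt2 (CD D) \<alpha> = tc_comp1 (CD D) h g \<and>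
     \<beta> \<in> tc_m2 (CD D) \<and> tc_src2 (CD D) \<beta> = tc_id1 (CD D) B \<and> tc_tgt2 (CD D) \<beta> = tc_comp1 (CD D) g h}"
  shows "x \<in> {ereal (max s t) | s t f g.
     0 \<le> s \<and> 0 \<le> t \<and> f \<in> LHom D A B s \<and> g \<in> LHom D B A t \<and>
     LComp D A B A s t g f = LShift D A A 0 (s + t) (LId D A) \<and>
     LComp D B A B t s f g = LShift D B B 0 (s + t) (LId D B)}"
proof -
  obtain g h \<alpha> \<beta> where x: "x = ereal (max (max (WD1 g) (WD1 h)) (max (WD2 \<alpha>) (WD2 \<beta>)))"
    and g: "g \<in> tc_m1 (CD D)" "tc_src1 (CD D) g = A" "tc_tgt1 (CD D) g = B"
    and h: "h \<in> tc_m1 (CD D)" "tc_src1 (CD D) h = B" "tc_tgt1 (CD D) h = A"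
    and a: "\<alpha> \<in> tc_m2 (CD D)" "tc_src2 (CD D) \<alpha> = tc_id1 (CD D) A" "tc_tgt2 (CD D) \<alpha> = tc_comp1 (CD D) h g"
    and b: "\<beta> \<in> tc_m2 (CD D)" "tc_src2 (CD D) \<beta> = tc_id1 (CD D) B" "tc_tgt2 (CD D) \<beta> = tc_comp1 (CD D) g h"
    using assms(4) by blast
  obtain s f where gs: "g = (A,B,s,f)" "0 \<le> s" "f \<in> LHom D A B s" using g by (auto simp: CD_def)
  obtain t k where ht: "h = (B,A,t,k)" "0 \<le> t" "k \<in> LHom D B A t" using h by (auto simp: CD_def)
  have a2: "\<alpha> = ((A,A,0,LId D A),(A,A,s+t,LComp D A B A s t k f))"
    using a gs ht by (simp add: CD_def cd_comp1_def prod_eq_iff)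
  have b2: "\<beta> = ((B,B,0,LId D B),(B,B,t+s,LComp D B A B t s f k))"
    using b gs ht by (simp add: CD_def cd_comp1_def prod_eq_iff)
  have e1: "LComp D A B A s t k f = LShift D A A 0 (s + t) (LId D A)"
    using a(1) unfolding a2 by (simp add: CD_def)
  have e2: "LComp D B A B t s f k = LShift D B B 0 (s + t) (LId D B)"
    using b(1) unfolding b2 by (simp add: CD_def add.commute)
  have "x = ereal (max s t)" using x gs ht by (simp add: WD1_def WD2_def)
  then show ?thesis using gs ht e1 e2 by blast
qed

lemma p6: assumes "is_lpc D" "A \<in> LOb D" "B \<in> LOb D"
  shows "lpc_dist D A B = wdist (CD D) WD1 WD2 A B"
  unfolding lpc_dist_def wdist_def
proof (rule arg_cong[where f=Inf], rule set_eqI, rule iffI)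
  fix x assume "x \<in> {ereal (max s t) | s t f g.
     0 \<le> s \<and> 0 \<le> t \<and> f \<in> LHom D A B s \<and> g \<in> LHom D B A t \<and>
     LComp D A B A s t g f = LShift D A A 0 (s + t) (LId D A) \<and>
     LComp D B A B t s f g = LShift D B B 0 (s + t) (LId D B)}"
  then obtain s t f g where x: "x = ereal (max s t)" "0 \<le> s" "0 \<le> t" "f \<in> LHom D A B s" "g \<in> LHom D B A t"
     "LComp D A B A s t g f = LShift D A A 0 (s + t) (LId D A)"
     "LComp D B A B t s f g = LShift D B B 0 (s + t) (LId D B)" by blast
  have c1: "LComp D A B A s t g f \<in> LHom D A A (s+t)" "LComp D B A B t s f g \<in> LHom D B B (t+s)"
    using co_mem[OF assms(1)] assms x by blast+
  have i: "LId D A \<in> LHom D A A 0" "LId D B \<in> LHom D B B 0" using id_mem[OF assms(1)] assms by blast+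
  show "x \<in> {ereal (max (max (WD1 g) (WD1 h)) (max (WD2 \<alpha>) (WD2 \<beta>))) | g h \<alpha> \<beta>.
     g \<in> tc_m1 (CD D) \<and> tc_src1 (CD D) g = A \<and> tc_tgt1 (CD D) g = B \<and>
     h \<in> tc_m1 (CD D) \<and> tc_src1 (CD D) h = B \<and> tc_tgt1 (CD D) h = A \<and>
     \<alpha> \<in> tc_m2 (CD D) \<and> tc_src2 (CD D) \<alpha> = tc_id1 (CD D) A \<and> tc_tgt2 (CD D) \<alpha> = tc_comp1 (CD D) h g \<and>
     \<beta> \<in> tc_m2 (CD D) \<and> tc_src2 (CD D) \<beta> = tc_id1 (CD D) B \<and> tc_tgt2 (CD D) \<beta> = tc_comp1 (CD D) g h}"
    apply (rule CollectI)
    apply (rule exI[where x="(A,B,s,f)"], rule exI[where x="(B,A,t,g)"])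
    apply (rule exI[where x="((A,A,0,LId D A),(A,A,s+t,LComp D A B A s t g f))"])
    apply (rule exI[where x="((B,B,0,LId D B),(B,B,t+s,LComp D B A B t s f g))"])
    using x c1 i assms by (simp add: CD_def cd_comp1_def WD1_def WD2_def add.commute)
next
  fix x assume "x \<in> {ereal (max (max (WD1 g) (WD1 h)) (max (WD2 \<alpha>) (WD2 \<beta>))) | g h \<alpha> \<beta>.
     g \<in> tc_m1 (CD D) \<and> tc_src1 (CD D) g = A \<and> tc_tgt1 (CD D) g = B \<and>
     h \<in> tc_m1 (CD D) \<and> tc_src1 (CD D) h = B \<and> tc_tgt1 (CD D) h = A \<and>
     \<alpha> \<in> tc_m2 (CD D) \<and> tc_src2 (CD D) \<alpha> = tc_id1 (CD D) A \<and> tc_tgt2 (CD D) \<alpha> = tc_comp1 (CD D) h g \<and>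
     \<beta> \<in> tc_m2 (CD D) \<and> tc_src2 (CD D) \<beta> = tc_id1 (CD D) B \<and> tc_tgt2 (CD D) \<beta> = tc_comp1 (CD D) g h}"
  then show "x \<in> {ereal (max s t) | s t f g.
     0 \<le> s \<and> 0 \<le> t \<and> f \<in> LHom D A B s \<and> g \<in> LHom D B A t \<and>
     LComp D A B A s t g f = LShift D A A 0 (s + t) (LId D A) \<and>
     LComp D B A B t s f g = LShift D B B 0 (s + t) (LId D B)}"
    by (rule p6b[OF assms])
qed

theorem theorem5p25:
  fixes D :: "('o, 'm) lpc" and E :: "('p, 'n) lpc" and H :: "('q, 'k) lpc"
    and F G :: "('o, 'm, 'p, 'n) lpfun" and K :: "('p, 'n, 'q, 'k) lpfun"
    and A B :: 'o
  shows "(is_lpc D \<longrightarrow> weighted_twocat (CD D) WD1 WD2) \<and>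
    (is_lpc D \<and> is_lpc E \<and> is_lpfunctor D E F \<longrightarrow>
       lipschitz_twofun (CD D) WD1 WD2 (CD E) WD1 WD2 (lpstar F)) \<and>
    (is_lpc D \<longrightarrow> twofun_eq (CD D) (lpstar (lpfun_id :: ('o, 'm, 'o, 'm) lpfun)) twofun_id) \<and>
    (is_lpc D \<and> is_lpc E \<and> is_lpc H \<and> is_lpfunctor D E F \<and> is_lpfunctor E H K \<longrightarrow>
       twofun_eq (CD D) (lpstar (lpfun_comp K F)) (twofun_comp (lpstar K) (lpstar F))) \<and>
    (is_lpc D \<and> is_lpc E \<and> is_lpfunctor D E F \<and> is_lpfunctor D E G \<and>
       twofun_eq (CD D) (lpstar F) (lpstar G) \<longrightarrow> lpfun_eq D F G) \<and>
    (is_lpc D \<and> A \<in> LOb D \<and> B \<in> LOb D \<longrightarrow> lpc_dist D A B = wdist (CD D) WD1 WD2 A B)"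
  apply (intro conjI impI)
       apply (erule p1)
      apply (elim conjE, erule (2) p2)
     apply (rule p3)
    apply (rule p4)
   apply (elim conjE, erule p5)
  apply (elim conjE, erule (2) p6)
  done

end
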